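(* Let $v,\rho\in\mathbb{N}^+$, let $\boldsymbol\alpha=(\alpha,\dots,\alpha)\in\mathbb{N}^{v+1}$ with $\alpha\ge1$ (non-informative prior), and let $R$ be a symmetric, bounded, strictly proper scoring rule on outcomes $\{0,\dots,v\}$. Fix a reviewer $i$ with observed signals $\mathbf{t}_i=(t_{i,1},\dots,t_{i,\rho})\in\{0,\dots,v\}^\rho$ and true posterior predictive distribution $\boldsymbol\theta=\mathbf{p}^{(\rho)}(\mathbf{t}_i)$, and suppose $\mathbf{t}_i$ has a unique mode $z$, i.e. $\#\{m:t_{i,m}=z\}>\#\{m:t_{i,m}=y\}$ for all $y\ne z$. The reviewer reports a single value $r\in\{0,\dots,v\}$ and is scored by $\sum_{j\ne i}(\gamma R(\mathbf{p}(r),r_j)+\lambda)$ with $\gamma>0,\lambda\in\mathbb{R}$; his expected score is $$S_i(r)=\sum_{j\neq i}\sum_{e=0}^v\theta_e\big(\gamma R(\mathbf{p}(r),e)+\lambda\big).$$ Then $S_i(r)$ is strictly maximized over $r\in\{0,\dots,v\}$ if and only if $r=z$.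
   Context: For $x\in\{0,\dots,v\}$, $\mathbf{p}(x)$ is the probability vector with $p_k(x)=\frac{\alpha_k+1}{1+\sum_m\alpha_m}$ if $k=x$ and $\frac{\alpha_k}{1+\sum_m\alpha_m}$ otherwise. For $\mathbf{x}\in\{0,\dots,v\}^\rho$, $\mathbf{p}^{(\rho)}(\mathbf{x})$ has entries $p^{(\rho)}_k(\mathbf{x})=\frac{\alpha_k+\#\{m:x_m=k\}}{\rho+\sum_l\alpha_l}$. A scoring rule $R(\mathbf{z},e)$ is strictly proper if $\sum_eq_eR(\mathbf{z},e)$ is uniquely maximized at $\mathbf{z}=\mathbf{q}$ for every probability vector $\mathbf{q}$; symmetric if its value is invariant under simultaneously permuting the entries of $\mathbf{z}$ and relabeling the outcome $e$ accordingly; bounded if it is always finite. *)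

theory Defs
  imports Complex_Main "HOL-Combinatorics.Permutations"
begin

definition prob_vec :: "nat \<Rightarrow> (nat \<Rightarrow> real) \<Rightarrow> bool" where
  "prob_vec v q \<longleftrightarrow> (\<forall>k\<le>v. 0 \<le> q k) \<and> (\<forall>k>v. q k = 0) \<and> (\<Sum>k\<le>v. q k) = 1"

definition p_single :: "nat \<Rightarrow> (nat \<Rightarrow> nat) \<Rightarrow> nat \<Rightarrow> nat \<Rightarrow> real" where
  "p_single v a x k = (if k \<le> v then
      (real (a k) + (if k = x then 1 else 0)) / (1 + (\<Sum>m\<le>v. real (a m))) else 0)"

definition sig_count :: "nat \<Rightarrow> (nat \<Rightarrow> nat) \<Rightarrow> nat \<Rightarrow> nat" where
  "sig_count \<rho> t k = card {m \<in> {1..\<rho>}. t m = k}"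

definition p_rho :: "nat \<Rightarrow> nat \<Rightarrow> (nat \<Rightarrow> nat) \<Rightarrow> (nat \<Rightarrow> nat) \<Rightarrow> nat \<Rightarrow> real" where
  "p_rho v \<rho> a t k = (if k \<le> v then
      (real (a k) + real (sig_count \<rho> t k)) / (real \<rho> + (\<Sum>l\<le>v. real (a l))) else 0)"

definition strictly_proper :: "nat \<Rightarrow> ((nat \<Rightarrow> real) \<Rightarrow> nat \<Rightarrow> real) \<Rightarrow> bool" where
  "strictly_proper v R \<longleftrightarrow>
     (\<forall>q. prob_vec v q \<longrightarrow> (\<forall>z. prob_vec v z \<longrightarrow> z \<noteq> q \<longrightarrow>
        (\<Sum>e\<le>v. q e * R z e) < (\<Sum>e\<le>v. q e * R q e)))"

definition symmetric_sr :: "nat \<Rightarrow> ((nat \<Rightarrow> real) \<Rightarrow> nat \<Rightarrow> real) \<Rightarrow> bool" where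
  "symmetric_sr v R \<longleftrightarrow>
     (\<forall>\<sigma>. \<sigma> permutes {..v} \<longrightarrow> (\<forall>z e. prob_vec v z \<longrightarrow> e \<le> v \<longrightarrow>
        R (z \<circ> \<sigma>) e = R z (\<sigma> e)))"

end

theory Submission
  imports Defs
begin

lemma swap_sum:
  fixes g h :: "nat \<Rightarrow> real"
  assumes "r \<le> v" "z \<le> v" "r \<noteq> z"
  shows "(\<Sum>e\<le>v. g e * h (transpose r z e)) = (\<Sum>e\<le>v. g e * h e) + (g r - g z) * (h z - h r)"
proof -
  have gen: "(\<Sum>e\<le>v. F e) = F r + F z + (\<Sum>e\<in>{..v}-{r}-{z}. F e)" for F :: "nat \<Rightarrow> real"
  proof -
    have "(\<Sum>e\<le>v. F e) = F r + (\<Sum>e\<in>{..v}-{r}. F e)"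
      using assms by (simp add: sum.remove)
    also have "(\<Sum>e\<in>{..v}-{r}. F e) = F z + (\<Sum>e\<in>{..v}-{r}-{z}. F e)"
      using assms by (intro sum.remove) auto
    finally show ?thesis by simp
  qed
  have rest: "(\<Sum>e\<in>{..v}-{r}-{z}. g e * h (transpose r z e)) = (\<Sum>e\<in>{..v}-{r}-{z}. g e * h e)"
    by (rule sum.cong) (auto simp: transpose_def)
  show ?thesis
    apply (subst gen, subst gen[of "\<lambda>e. g e * h e"])
    using rest assms by (simp add: transpose_def algebra_simps)
qed

lemma psingle_swap:
  assumes "r \<le> v" "z \<le> v"
  shows "p_single v (\<lambda>_. a) r = p_single v (\<lambda>_. a) z \<circ> transpose r z"
proof
  fix k
  show "p_single v (\<lambda>_. a) r k = (p_single v (\<lambda>_. a) z \<circ> transpose r z) k"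
    using assms by (auto simp: p_single_def transpose_def)
qed

lemma psingle_prob:
  assumes "z \<le> v"
  shows "prob_vec v (p_single v (\<lambda>_. a) z)"
proof -
  have "(\<Sum>k\<le>v. p_single v (\<lambda>_. a) z k) = (\<Sum>k\<le>v. (real a + (if k = z then 1 else 0)) / (1 + (\<Sum>m\<le>v. real a)))"
    by (rule sum.cong) (auto simp: p_single_def)
  also have "\<dots> = (\<Sum>k\<le>v. (real a + (if k = z then 1 else 0))) / (1 + (\<Sum>m\<le>v. real a))"
    by (simp add: sum_divide_distrib)
  also have "(\<Sum>k\<le>v. (real a + (if k = z then 1 else 0))) = (\<Sum>m\<le>v. real a) + 1"
    using assms by (simp add: sum.distrib)
  also have "((\<Sum>m\<le>v. real a) + 1) / (1 + (\<Sum>m\<le>v. real a)) = 1"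
  proof -
    have "1 + (\<Sum>m\<le>v. real a) > 0" by (simp add: add_pos_nonneg)
    thus ?thesis by (simp add: add.commute)
  qed
  finally show ?thesis
    unfolding prob_vec_def by (auto simp: p_single_def)
qed

theorem proposition4:
  fixes v \<rho> \<alpha> n i :: nat
    and R :: "(nat \<Rightarrow> real) \<Rightarrow> nat \<Rightarrow> real"
    and t :: "nat \<Rightarrow> nat"
    and z :: nat
    and \<gamma> lam :: real
  assumes "v \<ge> 1" and "\<rho> \<ge> 1" and "\<alpha> \<ge> 1"
    and "symmetric_sr v R" and "strictly_proper v R"
    and "n \<ge> 2" and "i \<in> {1..n}"
    and "\<forall>m\<in>{1..\<rho>}. t m \<le> v"
    and "z \<le> v"
    and "\<forall>y\<le>v. y \<noteq> z \<longrightarrow> sig_count \<rho> t y < sig_count \<rho> t z"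
    and "\<gamma> > 0"
  shows "\<forall>r\<le>v.
     ((\<forall>r'\<le>v. r' \<noteq> r \<longrightarrow>
        (\<Sum>j\<in>{1..n}-{i}. \<Sum>e\<le>v. p_rho v \<rho> (\<lambda>_. \<alpha>) t e *
            (\<gamma> * R (p_single v (\<lambda>_. \<alpha>) r') e + lam))
      < (\<Sum>j\<in>{1..n}-{i}. \<Sum>e\<le>v. p_rho v \<rho> (\<lambda>_. \<alpha>) t e *
            (\<gamma> * R (p_single v (\<lambda>_. \<alpha>) r) e + lam)))
     \<longleftrightarrow> r = z)"
proof -
  define th where "th = p_rho v \<rho> (\<lambda>_. \<alpha>) t"
  define P where "P = p_single v (\<lambda>_. \<alpha>)"
  define f where "f r = (\<Sum>e\<le>v. th e * R (P r) e)" for r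
  define J where "J = {1..n}-{i}"
  have cardJ: "card J = n - 1" unfolding J_def using assms(7) by auto
  have cJ: "real (card J) > 0" using cardJ assms(6) by simp
  have tot: "(\<Sum>j\<in>J. \<Sum>e\<le>v. th e * (\<gamma> * R (P r) e + lam))
        = real (card J) * (\<gamma> * f r + lam * (\<Sum>e\<le>v. th e))" for r
    by (simp add: f_def algebra_simps sum.distrib sum_distrib_left)
  have key: "f r < f z" if r: "r \<le> v" "r \<noteq> z" for r
  proof -
    have sw: "P r = P z \<circ> transpose r z"
      unfolding P_def using psingle_swap r assms(9) by blast
    have pz: "prob_vec v (P z)" unfolding P_def using psingle_prob assms(9) by blast
    have perm: "transpose r z permutes {..v}" using r assms(9) by (simp add: permutes_swap_id)
    have symR: "R (P r) e = R (P z) (transpose r z e)" if "e \<le> v" for e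
      using assms(4) perm pz that unfolding symmetric_sr_def sw by blast
    have fr: "f r = f z + (th r - th z) * (R (P z) z - R (P z) r)"
    proof -
      have "f r = (\<Sum>e\<le>v. th e * R (P z) (transpose r z e))"
        unfolding f_def by (rule sum.cong) (auto simp: symR)
      also have "\<dots> = f z + (th r - th z) * (R (P z) z - R (P z) r)"
        unfolding f_def using swap_sum r assms(9) by blast
      finally show ?thesis .
    qed
    have prz: "prob_vec v (P r)" unfolding P_def using psingle_prob r by blast
    have neq: "P r \<noteq> P z"
    proof
      assume "P r = P z"
      hence "P r z = P z z" by simp
      moreover have "1 + (1 + real v) * real \<alpha> > 0" by (simp add: add_pos_nonneg)
      ultimately show False using r assms(9) by (simp add: P_def p_single_def)
    qed
    have sp: "(\<Sum>e\<le>v. P z e * R (P r) e) < (\<Sum>e\<le>v. P z e * R (P z) e)"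
      using assms(5) pz prz neq unfolding strictly_proper_def by blast
    have "(\<Sum>e\<le>v. P z e * R (P r) e) = (\<Sum>e\<le>v. P z e * R (P z) (transpose r z e))"
      by (rule sum.cong) (auto simp: symR)
    also have "\<dots> = (\<Sum>e\<le>v. P z e * R (P z) e) + (P z r - P z z) * (R (P z) z - R (P z) r)"
      using swap_sum r assms(9) by blast
    finally have "(P z r - P z z) * (R (P z) z - R (P z) r) < 0" using sp by simp
    moreover have "P z r < P z z"
      using r assms(9) by (simp add: P_def p_single_def divide_strict_right_mono add_pos_nonneg sum_nonneg)
    ultimately have R1: "R (P z) z - R (P z) r > 0"
      by (smt (verit) mult_nonpos_nonpos)
    have "th r < th z"
      using r assms(9) assms(10) assms(2)
      by (simp add: th_def p_rho_def divide_strict_right_mono add_pos_nonneg sum_nonneg)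
    hence "(th r - th z) * (R (P z) z - R (P z) r) < 0"
      using R1 by (simp add: mult_neg_pos)
    thus ?thesis using fr by simp
  qed
  have eqv: "(\<Sum>j\<in>J. \<Sum>e\<le>v. th e * (\<gamma> * R (P r') e + lam)) < (\<Sum>j\<in>J. \<Sum>e\<le>v. th e * (\<gamma> * R (P r) e + lam))
     \<longleftrightarrow> f r' < f r" for r r'
    unfolding tot using cJ assms(11) by (simp add: mult_less_cancel_left_pos)
  have main: "(\<forall>r'\<le>v. r' \<noteq> r \<longrightarrow> f r' < f r) \<longleftrightarrow> r = z" if r: "r \<le> v" for r
  proof
    assume h: "\<forall>r'\<le>v. r' \<noteq> r \<longrightarrow> f r' < f r"
    show "r = z"
    proof (rule ccontr)
      assume "r \<noteq> z"
      hence "f z < f r" "f r < f z" using h assms(9) key r by auto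
      thus False by simp
    qed
  next
    assume "r = z"
    thus "\<forall>r'\<le>v. r' \<noteq> r \<longrightarrow> f r' < f r" using key by auto
  qed
  show ?thesis
    unfolding th_def[symmetric] P_def[symmetric] J_def[symmetric] eqv
    using main by blast
qed

end
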